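(* Let $G$ be a group generated by $n$ elements $x_1,\dots,x_n$ such that $[e]_g$ is a subgroup of $G$ for every $g\in G$. Then ${\rm wid}(\gamma_2(G))\le n-1$, and ${\rm wid}(\gamma_k(G))\le n^{k-2}(n-1)/2$ for every $k\ge 3$.
   Context: $[x,y]=x^{-1}y^{-1}xy$; $[e]_g=\{[x,g]\mid x\in G\}$. The lower central series is $\gamma_1(G)=G$, $\gamma_{k+1}(G)=[\gamma_k(G),G]$; $\gamma_k(G)$ is the verbal subgroup defined by the word $\gamma_k\in F_k$ given by $\gamma_1(x_1)=x_1$, $\gamma_{k+1}(x_1,\dots,x_{k+1})=[\gamma_k(x_1,\dots,x_k),x_{k+1}]$. For a word $w\in F_m$, $w(G)$ is the subgroup generated by all values $w(g_1,\dots,g_m)$, $g_i\in G$; for $g\in w(G)$, $l_w(g)$ is the least number of values $w(g_1,\dots,g_m)^{\pm1}$ whose product is $g$, and ${\rm wid}(w(G))=\sup_{g\in w(G)} l_w(g)$. Here ${\rm wid}(\gamma_k(G))$ is the width with respect to the word $\gamma_k$. *)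

theory Defs
  imports "HOL-Algebra.Algebra" "HOL-Library.Extended_Nat"
begin

definition comm :: "('a, 'b) monoid_scheme \<Rightarrow> 'a \<Rightarrow> 'a \<Rightarrow> 'a" where
  "comm G x y = inv\<^bsub>G\<^esub> x \<otimes>\<^bsub>G\<^esub> inv\<^bsub>G\<^esub> y \<otimes>\<^bsub>G\<^esub> x \<otimes>\<^bsub>G\<^esub> y"

definition comm_set :: "('a, 'b) monoid_scheme \<Rightarrow> 'a \<Rightarrow> 'a set" where
  "comm_set G g = {comm G x g | x. x \<in> carrier G}"

text \<open>Value of the word gamma_k at the arguments g 0, ..., g (k-1):
  gamma_1(x_1) = x_1, gamma_{k+1}(x_1..x_{k+1}) = [gamma_k(x_1..x_k), x_{k+1}].
  (k = 0 is not meaningful; it is given the dummy value 1.)\<close>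
fun gamma_val :: "('a, 'b) monoid_scheme \<Rightarrow> nat \<Rightarrow> (nat \<Rightarrow> 'a) \<Rightarrow> 'a" where
  "gamma_val G 0 g = \<one>\<^bsub>G\<^esub>"
| "gamma_val G (Suc 0) g = g 0"
| "gamma_val G (Suc (Suc k)) g = comm G (gamma_val G (Suc k) g) (g (Suc k))"

definition gamma_values :: "('a, 'b) monoid_scheme \<Rightarrow> nat \<Rightarrow> 'a set" where
  "gamma_values G k = {gamma_val G k g | g. \<forall>i<k. g i \<in> carrier G}"

definition gamma_subgroup :: "('a, 'b) monoid_scheme \<Rightarrow> nat \<Rightarrow> 'a set" where
  "gamma_subgroup G k = generate G (gamma_values G k)"

definition word_length :: "('a, 'b) monoid_scheme \<Rightarrow> 'a set \<Rightarrow> 'a \<Rightarrow> nat" where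
  "word_length G S x = (LEAST m. \<exists>xs. length xs = m \<and> set xs \<subseteq> S \<union> (\<lambda>y. inv\<^bsub>G\<^esub> y) ` S
       \<and> x = foldr (\<lambda>a b. a \<otimes>\<^bsub>G\<^esub> b) xs \<one>\<^bsub>G\<^esub>)"

definition width :: "('a, 'b) monoid_scheme \<Rightarrow> 'a set \<Rightarrow> enat" where
  "width G S = (SUP x \<in> generate G S. enat (word_length G S x))"

end

theory Submission imports Defs begin

definition nsub :: "('a, 'b) monoid_scheme \<Rightarrow> 'a set \<Rightarrow> bool" where
  "nsub G H \<longleftrightarrow> H \<subseteq> carrier G \<and> \<one>\<^bsub>G\<^esub> \<in> H \<and> (\<forall>a\<in>H. \<forall>b\<in>H. a \<otimes>\<^bsub>G\<^esub> b \<in> H)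
     \<and> (\<forall>a\<in>H. inv\<^bsub>G\<^esub> a \<in> H) \<and> (\<forall>g\<in>carrier G. \<forall>a\<in>H. inv\<^bsub>G\<^esub> g \<otimes>\<^bsub>G\<^esub> a \<otimes>\<^bsub>G\<^esub> g \<in> H)"

fun zser :: "('a, 'b) monoid_scheme \<Rightarrow> 'a set \<Rightarrow> nat \<Rightarrow> 'a set" where
  "zser G M 0 = M"
| "zser G M (Suc m) = {g \<in> carrier G. \<forall>h\<in>carrier G. comm G g h \<in> zser G M m}"

context group begin

lemma canc1[simp]: "x \<in> carrier G \<Longrightarrow> y \<in> carrier G \<Longrightarrow> x \<otimes> (inv x \<otimes> y) = y"
  by (simp add: m_assoc[symmetric])
lemma canc2[simp]: "x \<in> carrier G \<Longrightarrow> y \<in> carrier G \<Longrightarrow> inv x \<otimes> (x \<otimes> y) = y"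
  by (simp add: m_assoc[symmetric])

lemma comm_closed[simp]: "a \<in> carrier G \<Longrightarrow> b \<in> carrier G \<Longrightarrow> comm G a b \<in> carrier G"
  by (simp add: comm_def)

lemma comm_inv: "a \<in> carrier G \<Longrightarrow> b \<in> carrier G \<Longrightarrow> inv (comm G a b) = comm G b a"
  by (simp add: comm_def m_assoc inv_mult_group)

lemma comm_self: "a \<in> carrier G \<Longrightarrow> comm G a a = \<one>"
  by (simp add: comm_def m_assoc)

lemma comm_one: "a \<in> carrier G \<Longrightarrow> comm G a \<one> = \<one>"
  by (simp add: comm_def m_assoc)
lemma comm_one': "a \<in> carrier G \<Longrightarrow> comm G \<one> a = \<one>"
  by (simp add: comm_def m_assoc)

lemma I2: "a \<in> carrier G \<Longrightarrow> b \<in> carrier G \<Longrightarrow> h \<in> carrier G \<Longrightarrow>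
  comm G (a \<otimes> b) h = inv b \<otimes> comm G a h \<otimes> b \<otimes> comm G b h"
  by (simp add: comm_def m_assoc inv_mult_group)

lemma I3: "a \<in> carrier G \<Longrightarrow> y \<in> carrier G \<Longrightarrow> h \<in> carrier G \<Longrightarrow>
  comm G a (h \<otimes> y) = comm G a y \<otimes> (inv y \<otimes> comm G a h \<otimes> y)"
  by (simp add: comm_def m_assoc inv_mult_group)

lemma I4: "a \<in> carrier G \<Longrightarrow> h \<in> carrier G \<Longrightarrow>
  comm G a (inv h) = inv (inv (inv h) \<otimes> comm G a h \<otimes> inv h)"
  by (simp add: comm_def m_assoc inv_mult_group)

lemma I5: "a \<in> carrier G \<Longrightarrow> h \<in> carrier G \<Longrightarrow>
  comm G (inv a) h = inv (inv a) \<otimes> inv (comm G a h) \<otimes> inv a"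
  by (simp add: comm_def m_assoc inv_mult_group)

lemma I6: "a \<in> carrier G \<Longrightarrow> g \<in> carrier G \<Longrightarrow> h \<in> carrier G \<Longrightarrow>
  comm G (inv g \<otimes> a \<otimes> g) h = inv g \<otimes> comm G a (g \<otimes> h \<otimes> inv g) \<otimes> g"
  by (simp add: comm_def m_assoc inv_mult_group)

lemma I7: "a \<in> carrier G \<Longrightarrow> h \<in> carrier G \<Longrightarrow> comm G a h = inv a \<otimes> (inv h \<otimes> a \<otimes> h)"
  by (simp add: comm_def m_assoc)


lemma nsub_subgroup: "nsub G H \<Longrightarrow> subgroup H G"
  unfolding nsub_def by (intro subgroupI) auto

lemma nsubD: assumes "nsub G H"
  shows "H \<subseteq> carrier G" "\<one> \<in> H" "a \<in> H \<Longrightarrow> b \<in> H \<Longrightarrow> a \<otimes> b \<in> H"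
    "a \<in> H \<Longrightarrow> inv a \<in> H" "g \<in> carrier G \<Longrightarrow> a \<in> H \<Longrightarrow> inv g \<otimes> a \<otimes> g \<in> H"
  using assms unfolding nsub_def by auto

lemma comm_set_nsub: assumes c: "c \<in> carrier G" and s: "subgroup (comm_set G c) G"
  shows "nsub G (comm_set G c)"
proof -
  interpret S: subgroup "comm_set G c" G by (rule s)
  have "inv g \<otimes> a \<otimes> g \<in> comm_set G c" if g: "g \<in> carrier G" and a: "a \<in> comm_set G c" for g a
  proof -
    obtain y where y: "y \<in> carrier G" "a = comm G y c" using a unfolding comm_set_def by auto
    have "inv g \<otimes> a \<otimes> g = comm G (y \<otimes> g) c \<otimes> inv (comm G g c)"
      using y g c by (simp add: I2 m_assoc)
    moreover have "comm G (y \<otimes> g) c \<in> comm_set G c" "comm G g c \<in> comm_set G c"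
      using y g unfolding comm_set_def by auto
    ultimately show ?thesis by auto
  qed
  then show ?thesis unfolding nsub_def using S.subset S.one_closed by auto
qed

lemma gen_lemma:
  fixes x :: "nat \<Rightarrow> 'a" and n :: nat
  assumes W: "nsub G W" and a: "a \<in> carrier G"
    and xs: "x ` {..<n} \<subseteq> carrier G" and gen: "generate G (x ` {..<n}) = carrier G"
    and hx: "\<And>l. l < n \<Longrightarrow> comm G a (x l) \<in> W"
  shows "h \<in> carrier G \<Longrightarrow> comm G a h \<in> W"
proof -
  let ?K = "{h \<in> carrier G. comm G a h \<in> W}"
  have "subgroup ?K G"
  proof (rule subgroupI)
    show "?K \<noteq> {}" using a comm_one nsubD(2)[OF W] by auto
    fix h y assume "h \<in> ?K" "y \<in> ?K"
    then show "h \<otimes> y \<in> ?K" using I3[OF a] nsubD[OF W] by auto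
  next
    fix h assume "h \<in> ?K"
    then have h: "h \<in> carrier G" "comm G a h \<in> W" by auto
    have "inv (inv h) \<otimes> comm G a h \<otimes> inv h \<in> W" using nsubD(5)[OF W _ h(2), of "inv h"] h by blast
    then have "inv (inv (inv h) \<otimes> comm G a h \<otimes> inv h) \<in> W" using nsubD(4)[OF W] by blast
    then show "inv h \<in> ?K" using I4[OF a h(1)] h by auto
  qed auto
  moreover have "x ` {..<n} \<subseteq> ?K" using xs hx by auto
  ultimately have "generate G (x ` {..<n}) \<subseteq> ?K" using generate_subgroup_incl by blast
  then show "h \<in> carrier G \<Longrightarrow> comm G a h \<in> W" using gen by auto
qed

lemma gen_lemma':
  fixes x :: "nat \<Rightarrow> 'a" and n :: nat
  assumes W: "nsub G W" and a: "a \<in> carrier G"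
    and xs: "x ` {..<n} \<subseteq> carrier G" and gen: "generate G (x ` {..<n}) = carrier G"
    and hx: "\<And>l. l < n \<Longrightarrow> comm G (x l) a \<in> W"
  shows "h \<in> carrier G \<Longrightarrow> comm G h a \<in> W"
proof -
  assume h: "h \<in> carrier G"
  have "comm G a (x l) \<in> W" if "l < n" for l
  proof -
    have "x l \<in> carrier G" using xs that by auto
    then show ?thesis using hx[OF that] nsubD(4)[OF W] comm_inv[OF _ a, of "x l"] by metis
  qed
  then have "comm G a h \<in> W" using gen_lemma[OF W a xs gen] h by auto
  then show ?thesis using nsubD(4)[OF W] comm_inv[OF a h] by metis
qed

lemma zser_nsub: assumes M: "nsub G M" shows "nsub G (zser G M m) \<and> M \<subseteq> zser G M m"
proof (induction m)
  case 0 then show ?case using M by simp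
next
  case (Suc m)
  then have Z: "nsub G (zser G M m)" and MZ: "M \<subseteq> zser G M m" by auto
  note D = nsubD[OF Z]
  have "nsub G (zser G M (Suc m))"
    unfolding nsub_def
  proof (intro conjI ballI)
    show "zser G M (Suc m) \<subseteq> carrier G" by auto
    show "\<one> \<in> zser G M (Suc m)" using D(2) comm_one' by auto
  next
    fix a b assume "a \<in> zser G M (Suc m)" "b \<in> zser G M (Suc m)"
    then show "a \<otimes> b \<in> zser G M (Suc m)" using I2 D by auto
  next
    fix a assume "a \<in> zser G M (Suc m)"
    then have a: "a \<in> carrier G" "\<And>h. h \<in> carrier G \<Longrightarrow> comm G a h \<in> zser G M m" by auto
    have "comm G (inv a) h \<in> zser G M m" if h: "h \<in> carrier G" for h
    proof -
      have "inv (comm G a h) \<in> zser G M m" using D(4) a(2)[OF h] by blast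
      then have "inv (inv a) \<otimes> inv (comm G a h) \<otimes> inv a \<in> zser G M m" using D(5)[of "inv a"] a by blast
      then show ?thesis using I5[OF a(1) h] by simp
    qed
    then show "inv a \<in> zser G M (Suc m)" using a by auto
  next
    fix g a assume "g \<in> carrier G" "a \<in> zser G M (Suc m)"
    then show "inv g \<otimes> a \<otimes> g \<in> zser G M (Suc m)" using I6 D by auto
  qed
  moreover have "M \<subseteq> zser G M (Suc m)"
  proof
    fix a assume a: "a \<in> M"
    then have a': "a \<in> carrier G" "a \<in> zser G M m" using nsubD(1)[OF M] MZ by auto
    show "a \<in> zser G M (Suc m)" using a' I7 D by auto
  qed
  ultimately show ?case by auto
qed


lemma prod_lemma:
  assumes "finite C" "C \<subseteq> carrier G" "\<And>c. c \<in> C \<Longrightarrow> nsub G (comm_set G c)"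
  shows "\<exists>M. nsub G M \<and> (\<forall>c\<in>C. comm_set G c \<subseteq> M) \<and>
    (\<forall>z\<in>M. \<exists>xs. length xs \<le> card C \<and> set xs \<subseteq> {comm G y c | y c. y \<in> carrier G \<and> c \<in> C}
        \<and> z = foldr (\<lambda>a b. a \<otimes> b) xs \<one>)"
  using assms
proof (induction C rule: finite_induct)
  case empty
  have "nsub G {\<one>}" unfolding nsub_def by auto
  then show ?case by (intro exI[of _ "{\<one>}"]) auto
next
  case (insert c C)
  then obtain M where M: "nsub G M" "\<forall>c\<in>C. comm_set G c \<subseteq> M"
    "\<forall>z\<in>M. \<exists>xs. length xs \<le> card C \<and> set xs \<subseteq> {comm G y c | y c. y \<in> carrier G \<and> c \<in> C}
        \<and> z = foldr (\<lambda>a b. a \<otimes> b) xs \<one>" by auto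
  have N: "nsub G (comm_set G c)" using insert by auto
  note DM = nsubD[OF M(1)] and DN = nsubD[OF N]
  define M' where "M' = {a \<otimes> m | a m. a \<in> comm_set G c \<and> m \<in> M}"
  have "nsub G M'" unfolding nsub_def
  proof (intro conjI ballI)
    show "M' \<subseteq> carrier G" unfolding M'_def using DM(1) DN(1) by auto
    show "\<one> \<in> M'" unfolding M'_def using DM(2) DN(2) by force
  next
    fix u v assume "u \<in> M'" "v \<in> M'"
    then obtain a m a' m' where u: "u = a \<otimes> m" "a \<in> comm_set G c" "m \<in> M"
      and v: "v = a' \<otimes> m'" "a' \<in> comm_set G c" "m' \<in> M" unfolding M'_def by auto
    have c: "a \<in> carrier G" "m \<in> carrier G" "a' \<in> carrier G" "m' \<in> carrier G"
      using u v DM(1) DN(1) by auto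
    have "u \<otimes> v = (a \<otimes> a') \<otimes> ((inv a' \<otimes> m \<otimes> a') \<otimes> m')"
      using u v c by (simp add: m_assoc)
    moreover have "a \<otimes> a' \<in> comm_set G c" using DN(3) u v by auto
    moreover have "(inv a' \<otimes> m \<otimes> a') \<otimes> m' \<in> M" using DM(3,5) u v c by auto
    ultimately show "u \<otimes> v \<in> M'" unfolding M'_def by blast
  next
    fix u assume "u \<in> M'"
    then obtain a m where u: "u = a \<otimes> m" "a \<in> comm_set G c" "m \<in> M" unfolding M'_def by auto
    have c: "a \<in> carrier G" "m \<in> carrier G" using u DM(1) DN(1) by auto
    have "inv u = inv a \<otimes> (inv (inv a) \<otimes> inv m \<otimes> inv a)"
      using u c by (simp add: m_assoc inv_mult_group)
    moreover have "inv a \<in> comm_set G c" using DN(4) u by auto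
    moreover have "inv (inv a) \<otimes> inv m \<otimes> inv a \<in> M" using DM(4)[of m] DM(5)[of "inv a" "inv m"] u c by auto
    ultimately show "inv u \<in> M'" unfolding M'_def by blast
  next
    fix g u assume g: "g \<in> carrier G" and "u \<in> M'"
    then obtain a m where u: "u = a \<otimes> m" "a \<in> comm_set G c" "m \<in> M" unfolding M'_def by auto
    have c: "a \<in> carrier G" "m \<in> carrier G" using u DM(1) DN(1) by auto
    have "inv g \<otimes> u \<otimes> g = (inv g \<otimes> a \<otimes> g) \<otimes> (inv g \<otimes> m \<otimes> g)"
      using u c g by (simp add: m_assoc)
    moreover have "inv g \<otimes> a \<otimes> g \<in> comm_set G c" using DN(5) u g by auto
    moreover have "inv g \<otimes> m \<otimes> g \<in> M" using DM(5) u g by auto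
    ultimately show "inv g \<otimes> u \<otimes> g \<in> M'" unfolding M'_def by blast
  qed
  moreover have "\<forall>d\<in>insert c C. comm_set G d \<subseteq> M'"
  proof
    fix d assume d: "d \<in> insert c C"
    show "comm_set G d \<subseteq> M'"
    proof
      fix z assume z: "z \<in> comm_set G d"
      show "z \<in> M'"
      proof (cases "d = c")
        case True
        then have "z = z \<otimes> \<one>" "z \<in> carrier G" using z DN(1) by auto
        then show ?thesis unfolding M'_def using True z DM(2) by blast
      next
        case False
        then have "z \<in> M" using d z M(2) by auto
        then have "z = \<one> \<otimes> z" using DM(1) by auto
        then show ?thesis unfolding M'_def using \<open>z \<in> M\<close> DN(2) by blast
      qed
    qed
  qed
  moreover have "\<forall>z\<in>M'. \<exists>xs. length xs \<le> card (insert c C) \<and>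
      set xs \<subseteq> {comm G y d | y d. y \<in> carrier G \<and> d \<in> insert c C}
        \<and> z = foldr (\<lambda>a b. a \<otimes> b) xs \<one>"
  proof
    fix z assume "z \<in> M'"
    then obtain a m where u: "z = a \<otimes> m" "a \<in> comm_set G c" "m \<in> M" unfolding M'_def by auto
    obtain xs where xs: "length xs \<le> card C" "set xs \<subseteq> {comm G y c | y c. y \<in> carrier G \<and> c \<in> C}"
      "m = foldr (\<lambda>a b. a \<otimes> b) xs \<one>" using M(3) u(3) by blast
    obtain y where y: "y \<in> carrier G" "a = comm G y c" using u(2) unfolding comm_set_def by auto
    show "\<exists>xs. length xs \<le> card (insert c C) \<and>
      set xs \<subseteq> {comm G y d | y d. y \<in> carrier G \<and> d \<in> insert c C}
        \<and> z = foldr (\<lambda>a b. a \<otimes> b) xs \<one>"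
      apply (rule exI[of _ "a # xs"])
      using xs y u insert.hyps by auto
  qed
  ultimately show ?case by blast
qed

lemma width_bound:
  assumes M: "nsub G M" and SM: "S \<subseteq> M"
    and W: "\<And>z. z \<in> M \<Longrightarrow> \<exists>xs. length xs \<le> B \<and> set xs \<subseteq> (\<lambda>y. inv y) ` S
        \<and> z = foldr (\<lambda>a b. a \<otimes> b) xs \<one>"
  shows "width G S \<le> enat B"
  unfolding width_def
proof (rule SUP_least)
  fix z assume "z \<in> generate G S"
  then have "z \<in> M" using generate_subgroup_incl[OF SM nsub_subgroup[OF M]] by auto
  then obtain xs where xs: "length xs \<le> B" "set xs \<subseteq> (\<lambda>y. inv y) ` S"
        "z = foldr (\<lambda>a b. a \<otimes> b) xs \<one>" using W by blast
  have "word_length G S z \<le> length xs" unfolding word_length_def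
    by (rule Least_le) (use xs in auto)
  then show "enat (word_length G S z) \<le> enat B" using xs by auto
qed

end

lemma gamma_val_cong: "(\<And>i. i < k \<Longrightarrow> f i = g i) \<Longrightarrow> gamma_val G k f = gamma_val G k g"
proof (induction G k f rule: gamma_val.induct)
  case (3 G k f)
  then show ?case by simp
qed auto

lemma gamma_step: "k \<ge> 2 \<Longrightarrow> gamma_val G k (g(k-1 := y)) = comm G (gamma_val G (k-1) g) y"
proof -
  assume "k \<ge> 2"
  then obtain m where k: "k = Suc (Suc m)" by (metis add_2_eq_Suc le_Suc_ex)
  have "gamma_val G (Suc m) (g(Suc m := y)) = gamma_val G (Suc m) g" by (rule gamma_val_cong) auto
  then show ?thesis using k by simp
qed

lemma (in group) gamma_closed: "(\<And>i. i < k \<Longrightarrow> g i \<in> carrier G) \<Longrightarrow> gamma_val G k g \<in> carrier G"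
proof (induction k rule: less_induct)
  case (less k)
  show ?case
  proof (cases k)
    case (Suc m)
    then show ?thesis
    proof (cases m)
      case (Suc m')
      then have "gamma_val G (Suc m') g \<in> carrier G" using less \<open>k = Suc m\<close> by auto
      then show ?thesis using less \<open>k = Suc m\<close> Suc by simp
    qed (use less in simp)
  qed simp
qed

lemma (in group) gamma_in_M:
  fixes x :: "nat \<Rightarrow> 'a" and n :: nat
  assumes M: "nsub G M" and xs: "x ` {..<n} \<subseteq> carrier G" and gen: "generate G (x ` {..<n}) = carrier G"
    and hij: "\<And>i j. i < j \<Longrightarrow> j < n \<Longrightarrow> comm G (x i) (x j) \<in> zser G M m"
  shows "gamma_values G (Suc (Suc m)) \<subseteq> M"
proof -
  define Z where "Z = zser G M m"
  have Z: "nsub G Z" using zser_nsub[OF M] Z_def by auto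
  have all: "comm G (x i) (x j) \<in> Z" if "i < n" "j < n" for i j
  proof -
    have c: "x i \<in> carrier G" "x j \<in> carrier G" using that xs by auto
    consider "i < j" | "i = j" | "j < i" by (cases i j rule: linorder_cases) auto
    then show ?thesis
    proof cases
      case 1
      have "comm G (x i) (x j) \<in> zser G M m" using hij[OF 1 that(2)] .
      then show ?thesis unfolding Z_def .
    next
      case 2
      have "comm G (x i) (x j) = \<one>" using 2 comm_self c by simp
      then show ?thesis using nsubD(2)[OF Z] by simp
    next
      case 3
      have "comm G (x j) (x i) \<in> zser G M m" using hij[OF 3 that(1)] .
      then have "inv (comm G (x j) (x i)) \<in> Z" using nsubD(4)[OF Z] unfolding Z_def by blast
      then show ?thesis using comm_inv[OF c(2) c(1)] by simp
    qed
  qed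
  have all1: "comm G (x i) h \<in> Z" if "i < n" "h \<in> carrier G" for i h
  proof -
    have "x i \<in> carrier G" using that xs by auto
    then show ?thesis
      by (rule gen_lemma[OF Z _ xs gen _ that(2)]) (rule all[OF that(1)])
  qed
  have all2: "comm G g h \<in> Z" if "g \<in> carrier G" "h \<in> carrier G" for g h
    by (rule gen_lemma'[OF Z that(2) xs gen _ that(1)]) (rule all1[OF _ that(2)])
  have step: "t \<le> m \<Longrightarrow> (\<forall>i<Suc (Suc t). g i \<in> carrier G) \<Longrightarrow> gamma_val G (Suc (Suc t)) g \<in> zser G M (m - t)" for t g
  proof (induction t)
    case 0
    then have "g 0 \<in> carrier G" "g 1 \<in> carrier G" by auto
    then have "comm G (g 0) (g 1) \<in> Z" by (rule all2)
    then show ?case using Z_def by (simp add: numeral_eq_Suc)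
  next
    case (Suc t)
    have "Suc (m - Suc t) = m - t" using Suc.prems(1) by arith
    moreover have "gamma_val G (Suc (Suc t)) g \<in> zser G M (m - t)"
      using Suc.IH Suc.prems by auto
    ultimately have "gamma_val G (Suc (Suc t)) g \<in> zser G M (Suc (m - Suc t))" by simp
    moreover have "g (Suc (Suc t)) \<in> carrier G" using Suc.prems by blast
    ultimately have "comm G (gamma_val G (Suc (Suc t)) g) (g (Suc (Suc t))) \<in> zser G M (m - Suc t)"
      by (simp only: zser.simps) blast
    then show ?case by simp
  qed
  show ?thesis
  proof
    fix z assume "z \<in> gamma_values G (Suc (Suc m))"
    then obtain g where "z = gamma_val G (Suc (Suc m)) g" "\<forall>i<Suc (Suc m). g i \<in> carrier G"
      unfolding gamma_values_def by auto
    then show "z \<in> M" using step[of m g] by simp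
  qed
qed

lemma (in group) comm_in_inv_values:
  assumes k: "k \<ge> 2" and g: "\<And>i. i < k - 1 \<Longrightarrow> g i \<in> carrier G" and y: "y \<in> carrier G"
  shows "comm G y (gamma_val G (k-1) g) \<in> (\<lambda>y. inv y) ` gamma_values G k"
proof -
  have c: "gamma_val G (k-1) g \<in> carrier G" using gamma_closed g by blast
  have "comm G y (gamma_val G (k-1) g) = inv (comm G (gamma_val G (k-1) g) y)"
    using comm_inv[OF c y] by simp
  moreover have "comm G (gamma_val G (k-1) g) y = gamma_val G k (g(k-1 := y))"
    using gamma_step[OF k] by metis
  moreover have "gamma_val G k (g(k-1 := y)) \<in> gamma_values G k"
    unfolding gamma_values_def using g y by (auto intro!: exI[of _ "g(k-1 := y)"])
  ultimately show ?thesis by auto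
qed

lemma (in group) finish:
  assumes k: "k \<ge> 2" and fin: "finite C"
    and CV: "C \<subseteq> {gamma_val G (k-1) g | g. \<forall>i<k-1. g i \<in> carrier G}"
    and h4: "\<And>c. c \<in> carrier G \<Longrightarrow> subgroup (comm_set G c) G"
    and hM: "\<And>M. nsub G M \<Longrightarrow> (\<forall>c\<in>C. comm_set G c \<subseteq> M) \<Longrightarrow> gamma_values G k \<subseteq> M"
    and cB: "card C \<le> B"
  shows "width G (gamma_values G k) \<le> enat B"
proof -
  have Cc: "C \<subseteq> carrier G" using CV gamma_closed by blast
  obtain M where M: "nsub G M" "\<forall>c\<in>C. comm_set G c \<subseteq> M"
    "\<forall>z\<in>M. \<exists>xs. length xs \<le> card C \<and> set xs \<subseteq> {comm G y c | y c. y \<in> carrier G \<and> c \<in> C}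
        \<and> z = foldr (\<lambda>a b. a \<otimes> b) xs \<one>"
    using prod_lemma[OF fin Cc] comm_set_nsub h4 Cc by blast
  have sub: "{comm G y c | y c. y \<in> carrier G \<and> c \<in> C} \<subseteq> (\<lambda>y. inv y) ` gamma_values G k"
  proof
    fix z assume "z \<in> {comm G y c | y c. y \<in> carrier G \<and> c \<in> C}"
    then obtain y c where z: "z = comm G y c" "y \<in> carrier G" "c \<in> C" by blast
    then obtain g where "c = gamma_val G (k-1) g" "\<forall>i<k-1. g i \<in> carrier G" using CV by blast
    then show "z \<in> (\<lambda>y. inv y) ` gamma_values G k" using comm_in_inv_values[OF k, of g y] z by auto
  qed
  show ?thesis
  proof (rule width_bound[OF M(1) hM[OF M(1,2)]])
    fix z assume "z \<in> M"
    then obtain xs where "length xs \<le> card C" "set xs \<subseteq> {comm G y c | y c. y \<in> carrier G \<and> c \<in> C}"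
        "z = foldr (\<lambda>a b. a \<otimes> b) xs \<one>" using M(3) by blast
    then show "\<exists>xs. length xs \<le> B \<and> set xs \<subseteq> (\<lambda>y. inv y) ` gamma_values G k
        \<and> z = foldr (\<lambda>a b. a \<otimes> b) xs \<one>" using sub cB by (intro exI[of _ xs]) auto
  qed
qed

definition gf :: "(nat \<Rightarrow> 'a) \<Rightarrow> nat \<Rightarrow> nat \<Rightarrow> nat list \<Rightarrow> nat \<Rightarrow> 'a" where
  "gf x i j ls = (\<lambda>l. if l = 0 then x i else if l = 1 then x j
      else if l - 2 < length ls then x (ls ! (l - 2)) else x i)"

lemma gf_carrier: "x ` {..<n} \<subseteq> S \<Longrightarrow> i < n \<Longrightarrow> j < n \<Longrightarrow> set ls \<subseteq> {..<n} \<Longrightarrow> gf x i j ls l \<in> S"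
  unfolding gf_def by (auto dest: nth_mem)

lemma gf_snoc: "gamma_val G (length ls + 2) (gf x i j (ls @ [l])) = gamma_val G (length ls + 2) (gf x i j ls)"
  by (rule gamma_val_cong) (auto simp: gf_def nth_append)

lemma gf_last: "gf x i j (ls @ [l]) (length ls + 2) = x l"
  by (simp add: gf_def)

lemma card_pairs: "card {(i, j). i < j \<and> j < (n::nat)} = n * (n - 1) div 2"
proof (induction n)
  case 0 then show ?case by simp
next
  case (Suc n)
  have eq: "{(i, j). i < j \<and> j < Suc n} = {(i, j). i < j \<and> j < n} \<union> (\<lambda>i. (i, n)) ` {..<n}" by auto
  have fin: "finite {(i, j). i < j \<and> j < (n::nat)}"
    by (rule finite_subset[of _ "{..<n} \<times> {..<n}"]) auto
  have "card {(i, j). i < j \<and> j < Suc n} = card {(i, j). i < j \<and> j < n} + card ((\<lambda>i. (i, n)) ` {..<n})"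
    unfolding eq by (rule card_Un_disjoint) (use fin in auto)
  also have "card ((\<lambda>i. (i, n)) ` {..<n}) = n" by (subst card_image) (auto simp: inj_on_def)
  finally have "card {(i, j). i < j \<and> j < Suc n} = n * (n - 1) div 2 + n" using Suc by simp
  also have "\<dots> = Suc n * (Suc n - 1) div 2"
  proof (cases n)
    case (Suc m)
    then show ?thesis by (simp add: algebra_simps)
  qed simp
  finally show ?case .
qed

lemma (in group) desc:
  fixes x :: "nat \<Rightarrow> 'a" and n :: nat
  assumes M: "nsub G M" and xs: "x ` {..<n} \<subseteq> carrier G" and gen: "generate G (x ` {..<n}) = carrier G"
    and k: "k \<ge> 3"
    and hC: "\<And>i j ls y. i < j \<Longrightarrow> j < n \<Longrightarrow> set ls \<subseteq> {..<n} \<Longrightarrow> length ls = k - 3 \<Longrightarrow> y \<in> carrier G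
        \<Longrightarrow> comm G y (gamma_val G (k-1) (gf x i j ls)) \<in> M"
  shows "d \<le> k - 3 \<Longrightarrow> set ls \<subseteq> {..<n} \<Longrightarrow> length ls = k - 3 - d \<Longrightarrow> i < j \<Longrightarrow> j < n \<Longrightarrow>
     gamma_val G (k-1-d) (gf x i j ls) \<in> zser G M (Suc d)"
proof (induction d arbitrary: ls)
  case 0
  let ?c = "gamma_val G (k-1) (gf x i j ls)"
  have c: "?c \<in> carrier G" using gamma_closed gf_carrier[OF xs] 0 by auto
  have "comm G ?c h \<in> M" if h: "h \<in> carrier G" for h
  proof -
    have "comm G h ?c \<in> M" using hC 0 h by auto
    then have "inv (comm G h ?c) \<in> M" using nsubD(4)[OF M] by blast
    then show ?thesis using comm_inv[OF h c] by simp
  qed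
  then show ?case using c by simp
next
  case (Suc d)
  let ?m = "length ls"
  have km: "k - 1 - Suc d = ?m + 2" "k - 1 - d = ?m + 3" using Suc.prems k by auto
  let ?c = "gamma_val G (?m + 2) (gf x i j ls)"
  have c: "?c \<in> carrier G" using gamma_closed gf_carrier[OF xs] Suc.prems by auto
  have Z: "nsub G (zser G M (Suc d))" using zser_nsub[OF M] by blast
  have "comm G ?c (x l) \<in> zser G M (Suc d)" if l: "l < n" for l
  proof -
    have "gamma_val G (k-1-d) (gf x i j (ls @ [l])) \<in> zser G M (Suc d)"
      using Suc.IH[of "ls @ [l]"] Suc.prems l by auto
    moreover have "gamma_val G (?m + 3) (gf x i j (ls @ [l])) = comm G ?c (x l)"
      using gf_snoc[of G ls x i j l] gf_last[of x i j ls l]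
      by (simp add: numeral_eq_Suc)
    ultimately show ?thesis using km by simp
  qed
  then have "comm G ?c h \<in> zser G M (Suc d)" if "h \<in> carrier G" for h
    using gen_lemma[OF Z c xs gen _ that] by blast
  then show ?case using c km by simp
qed

theorem corollary1:
  fixes G (structure) and n :: nat and x :: "nat \<Rightarrow> 'a"
  assumes "group G"
    and "x ` {..<n} \<subseteq> carrier G"
    and "generate G (x ` {..<n}) = carrier G"
    and "\<And>g. g \<in> carrier G \<Longrightarrow> subgroup (comm_set G g) G"
  shows "width G (gamma_values G 2) \<le> enat (n - 1) \<and>
     (\<forall>k\<ge>3. width G (gamma_values G k) \<le> enat (n ^ (k - 2) * (n - 1) div 2))"
proof -
  interpret group G by (rule assms(1))
  note xs = assms(2) and gen = assms(3) and h4 = assms(4)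
  have part1: "width G (gamma_values G 2) \<le> enat (n - 1)"
  proof (rule finish[where C = "x ` {..<n-1}"])
    show "x ` {..<n - 1} \<subseteq> {gamma_val G (2 - 1) g |g. \<forall>i<2 - 1. g i \<in> carrier G}"
    proof
      fix c assume "c \<in> x ` {..<n - 1}"
      then obtain i where i: "i < n - 1" "c = x i" by auto
      then have "x i \<in> carrier G" using xs by auto
      then show "c \<in> {gamma_val G (2 - 1) g |g. \<forall>i<2 - 1. g i \<in> carrier G}"
        using i by (intro CollectI exI[of _ "\<lambda>_. x i"]) auto
    qed
    show "card (x ` {..<n - 1}) \<le> n - 1" using card_image_le[of "{..<n-1}" x] by simp
  next
    fix M assume M: "nsub G M" "\<forall>c\<in>x ` {..<n - 1}. comm_set G c \<subseteq> M"
    have "comm G (x i) (x j) \<in> zser G M 0" if ij: "i < j" "j < n" for i j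
    proof -
      have c: "x i \<in> carrier G" "x j \<in> carrier G" using ij xs by auto
      have "comm G (x j) (x i) \<in> comm_set G (x i)" unfolding comm_set_def using c by auto
      then have "comm G (x j) (x i) \<in> M" using M(2) ij by auto
      then have "inv (comm G (x j) (x i)) \<in> M" using nsubD(4)[OF M(1)] by blast
      then show ?thesis using comm_inv[OF c(2) c(1)] by simp
    qed
    then have "gamma_values G (Suc (Suc 0)) \<subseteq> M" using gamma_in_M[OF M(1) xs gen] by blast
    then show "gamma_values G 2 \<subseteq> M" by (simp add: numeral_2_eq_2)
  qed (use h4 in auto)
  have part2: "width G (gamma_values G k) \<le> enat (n ^ (k - 2) * (n - 1) div 2)" if k: "k \<ge> 3" for k
  proof -
    define P where "P = {(i, j). i < j \<and> j < n}"
    define L where "L = {ls. set ls \<subseteq> {..<n} \<and> length ls = k - 3}"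
    define C where "C = (\<lambda>((i, j), ls). gamma_val G (k-1) (gf x i j ls)) ` (P \<times> L)"
    have finP: "finite P" unfolding P_def by (rule finite_subset[of _ "{..<n} \<times> {..<n}"]) auto
    have finL: "finite L" unfolding L_def by (rule finite_lists_length_eq) simp
    have cardL: "card L = n ^ (k - 3)" unfolding L_def using card_lists_length_eq[of "{..<n}" "k-3"] by simp
    have cardP: "card P = n * (n - 1) div 2" unfolding P_def by (rule card_pairs)
    have "card C \<le> card (P \<times> L)" unfolding C_def by (rule card_image_le) (use finP finL in auto)
    also have "\<dots> = n * (n - 1) div 2 * n ^ (k - 3)" using cardP cardL card_cartesian_product by metis
    also have "\<dots> = n ^ (k - 2) * (n - 1) div 2"
    proof -
      have ev: "2 dvd n * (n - 1)" by (cases "even n") (auto simp: dvd_mult2 dvd_mult)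
      have "k - 2 = Suc (k - 3)" using k by arith
      then have "n ^ (k - 2) = n * n ^ (k - 3)" by simp
      then have e1: "n ^ (k - 3) * (n * (n - 1)) = n ^ (k - 2) * (n - 1)" by (simp only: mult_ac)
      have "n * (n - 1) div 2 * n ^ (k - 3) = n ^ (k - 3) * (n * (n - 1) div 2)" by (rule mult.commute)
      also have "\<dots> = n ^ (k - 3) * (n * (n - 1)) div 2" by (rule div_mult_swap[OF ev])
      also have "\<dots> = n ^ (k - 2) * (n - 1) div 2" by (simp only: e1)
      finally show ?thesis .
    qed
    finally have cardC: "card C \<le> n ^ (k - 2) * (n - 1) div 2" .
    show ?thesis
    proof (rule finish[where C = C and k = k])
      show "2 \<le> k" using k by simp
      show "finite C" unfolding C_def using finP finL by (intro finite_imageI finite_cartesian_product)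
      show "C \<subseteq> {gamma_val G (k - 1) g |g. \<forall>i<k - 1. g i \<in> carrier G}"
      proof
        fix c assume "c \<in> C"
        then obtain p where p: "p \<in> P \<times> L" "c = (\<lambda>((i, j), ls). gamma_val G (k-1) (gf x i j ls)) p"
          unfolding C_def by (rule imageE)
        obtain i j ls where pe: "p = ((i, j), ls)" by (metis prod.exhaust)
        have ijl: "i < j" "j < n" "set ls \<subseteq> {..<n}" using p(1) pe unfolding P_def L_def by auto
        have "\<forall>i'<k - 1. gf x i j ls i' \<in> carrier G"
          using gf_carrier[OF xs] ijl by (meson less_trans)
        moreover have "c = gamma_val G (k-1) (gf x i j ls)" using p(2) pe by simp
        ultimately show "c \<in> {gamma_val G (k - 1) g |g. \<forall>i<k - 1. g i \<in> carrier G}"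
          by blast
      qed
      show "card C \<le> n ^ (k - 2) * (n - 1) div 2" by (rule cardC)
      show "\<And>c. c \<in> carrier G \<Longrightarrow> subgroup (comm_set G c) G" by (rule h4)
    next
      fix M assume M: "nsub G M" "\<forall>c\<in>C. comm_set G c \<subseteq> M"
      have hC: "comm G y (gamma_val G (k-1) (gf x i j ls)) \<in> M"
        if "i < j" "j < n" "set ls \<subseteq> {..<n}" "length ls = k - 3" "y \<in> carrier G" for i j ls y
      proof -
        have "((i, j), ls) \<in> P \<times> L" unfolding P_def L_def using that by auto
        then have "gamma_val G (k-1) (gf x i j ls) \<in> C" unfolding C_def by (rule rev_image_eqI) simp
        moreover have "comm G y (gamma_val G (k-1) (gf x i j ls)) \<in> comm_set G (gamma_val G (k-1) (gf x i j ls))"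
          unfolding comm_set_def using that(5) by blast
        ultimately show ?thesis using M(2) by blast
      qed
      have "comm G (x i) (x j) \<in> zser G M (k - 2)" if ij: "i < j" "j < n" for i j
      proof -
        have "gamma_val G (k - 1 - (k - 3)) (gf x i j []) \<in> zser G M (Suc (k - 3))"
          by (rule desc[OF M(1) xs gen k hC]) (use ij in simp_all)
        moreover have "k - 1 - (k - 3) = Suc (Suc 0)" "Suc (k - 3) = k - 2" using k by arith+
        moreover have "gamma_val G (Suc (Suc 0)) (gf x i j []) = comm G (x i) (x j)" by (simp add: gf_def)
        ultimately show ?thesis by metis
      qed
      then have "gamma_values G (Suc (Suc (k - 2))) \<subseteq> M" using gamma_in_M[OF M(1) xs gen] by blast
      moreover have "Suc (Suc (k - 2)) = k" using k by auto
      ultimately show "gamma_values G k \<subseteq> M" by metis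
    qed
  qed
  show ?thesis using part1 part2 by auto
qed

end
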